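(* Let $q(x)=q_0+2q_1x+q_2x^2$ and let $(g_+,J_+,\omega_+)=(g_+^{(q)},J_+^{(q)},\omega_+^{(q)})$ be the regular positive ambitoric Kähler structure given below with functions $A,B$. Then, locally, $(g_+^{(q)},\omega_+^{(q)},J_+^{(q)})$ is a CR $f_q$-twist of the orthotoric Kähler structure $(g_+^{(1)},\omega_+^{(1)},J_+^{(1)})$ (the same ansatz with $q\equiv1$ and the same $A,B$), where $f_q(x_1,x_2)=q_0+q_1(x_1+x_2)+q_2x_1x_2>0$ is a Killing potential of $g_+^{(1)}$.
   Context: Regular positive ambitoric ansatz: coordinates $x_1>x_2$, $\tau_0,\tau_1,\tau_2$ with $2q_1\tau_1=q_0\tau_2+q_2\tau_0$; $A,B$ positive functions of one variable, $f_q>0$; $g_+=\frac{x_1-x_2}{f_q(x_1,x_2)}\Big(\frac{dx_1^2}{A(x_1)}+\frac{dx_2^2}{B(x_2)}+A(x_1)\alpha_1^2+B(x_2)\alpha_2^2\Big)$, $\omega_+=\frac{x_1-x_2}{f_q}(dx_1\wedge\alpha_1+dx_2\wedge\alpha_2)$, $J_+dx_1=A(x_1)\alpha_1$, $J_+dx_2=B(x_2)\alpha_2$, with $\alpha_1=\frac{d\tau_0+2x_2d\tau_1+x_2^2d\tau_2}{(x_1-x_2)f_q}$, $\alpha_2=\frac{d\tau_0+2x_1d\tau_1+x_1^2d\tau_2}{(x_1-x_2)f_q}$. For $q\equiv1$ this is an orthotoric metric. CR twist: given Kähler $(M,g,J,\omega)$ and a positive Killing potential $f$, let $(N,\mathscr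 D,J,\chi)$ be the local Sasaki manifold over $M$ (circle bundle with connection form $\eta$, $d\eta=\pi^*\omega$, $\mathscr D=\ker\eta$, $J$ lifted, $\chi$ the class of the circle generator); a CR $f$-twist is a Sasaki–Reeb quotient of $N$ by the Sasaki structure $f\chi$, i.e. the leaf space of the Reeb field of $\eta/f$ with Kähler structure induced by $d(\eta/f)|_{\mathscr D}$ and $J$. *)

theory Defs
  imports "HOL-Analysis.Analysis"
begin

text \<open>Coordinates on the ambitoric chart: a point p of real^5 has
  p$1 = x1, p$2 = x2, p$3 = tau0, p$4 = tau1, p$5 = tau2.
  The quadratic q(x) = q0 + 2 q1 x + q2 x^2 is given by (q0,q1,q2);
  q = 1 (orthotoric case) is (q0,q1,q2) = (1,0,0).\<close>

definition fq :: "real \<Rightarrow> real \<Rightarrow> real \<Rightarrow> real \<Rightarrow> real \<Rightarrow> real" where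
  "fq q0 q1 q2 x1 x2 = q0 + q1 * (x1 + x2) + q2 * x1 * x2"

text \<open>The linear constraint 2 q1 tau1 = q0 tau2 + q2 tau0 (on points and on
  tangent vectors).\<close>
definition tang :: "real \<Rightarrow> real \<Rightarrow> real \<Rightarrow> real^5 \<Rightarrow> bool" where
  "tang q0 q1 q2 v \<longleftrightarrow> 2 * q1 * v$4 = q0 * v$5 + q2 * v$3"

definition amb_dom :: "real \<Rightarrow> real \<Rightarrow> real \<Rightarrow> (real \<Rightarrow> real) \<Rightarrow> (real \<Rightarrow> real) \<Rightarrow> real^5 \<Rightarrow> bool" where
  "amb_dom q0 q1 q2 A B p \<longleftrightarrow> p$1 > p$2 \<and> tang q0 q1 q2 p \<and> fq q0 q1 q2 (p$1) (p$2) > 0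
     \<and> A (p$1) > 0 \<and> B (p$2) > 0"

definition alpha1 :: "real \<Rightarrow> real \<Rightarrow> real \<Rightarrow> real^5 \<Rightarrow> real^5 \<Rightarrow> real" where
  "alpha1 q0 q1 q2 p v = (v$3 + 2 * p$2 * v$4 + (p$2)^2 * v$5) / ((p$1 - p$2) * fq q0 q1 q2 (p$1) (p$2))"

definition alpha2 :: "real \<Rightarrow> real \<Rightarrow> real \<Rightarrow> real^5 \<Rightarrow> real^5 \<Rightarrow> real" where
  "alpha2 q0 q1 q2 p v = (v$3 + 2 * p$1 * v$4 + (p$1)^2 * v$5) / ((p$1 - p$2) * fq q0 q1 q2 (p$1) (p$2))"

definition wedge :: "('a \<Rightarrow> real) \<Rightarrow> ('a \<Rightarrow> real) \<Rightarrow> 'a \<Rightarrow> 'a \<Rightarrow> real" where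
  "wedge a b v w = a v * b w - a w * b v"

definition omega_amb :: "real \<Rightarrow> real \<Rightarrow> real \<Rightarrow> real^5 \<Rightarrow> real^5 \<Rightarrow> real^5 \<Rightarrow> real" where
  "omega_amb q0 q1 q2 p v w = (p$1 - p$2) / fq q0 q1 q2 (p$1) (p$2) *
     (wedge (\<lambda>u. u$1) (alpha1 q0 q1 q2 p) v w + wedge (\<lambda>u. u$2) (alpha2 q0 q1 q2 p) v w)"

definition g_amb :: "real \<Rightarrow> real \<Rightarrow> real \<Rightarrow> (real \<Rightarrow> real) \<Rightarrow> (real \<Rightarrow> real) \<Rightarrow> real^5 \<Rightarrow> real^5 \<Rightarrow> real^5 \<Rightarrow> real" where
  "g_amb q0 q1 q2 A B p v w = (p$1 - p$2) / fq q0 q1 q2 (p$1) (p$2) *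
     (v$1 * w$1 / A (p$1) + v$2 * w$2 / B (p$2)
      + A (p$1) * alpha1 q0 q1 q2 p v * alpha1 q0 q1 q2 p w
      + B (p$2) * alpha2 q0 q1 q2 p v * alpha2 q0 q1 q2 p w)"

text \<open>J_+ on tangent vectors, "u' = J_+ u", determined by J_+ dx1 = A alpha1,
  J_+ dx2 = B alpha2 (hence J_+ alpha1 = -dx1/A, J_+ alpha2 = -dx2/B), with the
  convention (J phi)(X) = - phi(J X) for the action on 1-forms.\<close>
definition J_amb :: "real \<Rightarrow> real \<Rightarrow> real \<Rightarrow> (real \<Rightarrow> real) \<Rightarrow> (real \<Rightarrow> real) \<Rightarrow> real^5 \<Rightarrow> real^5 \<Rightarrow> real^5 \<Rightarrow> bool" where
  "J_amb q0 q1 q2 A B p u u' \<longleftrightarrow> tang q0 q1 q2 u'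
     \<and> u'$1 = - A (p$1) * alpha1 q0 q1 q2 p u
     \<and> u'$2 = - B (p$2) * alpha2 q0 q1 q2 p u
     \<and> alpha1 q0 q1 q2 p u' = u$1 / A (p$1)
     \<and> alpha2 q0 q1 q2 p u' = u$2 / B (p$2)"

text \<open>Exterior derivative of a 1-form (evaluated on constant vector fields).\<close>
definition d1form :: "('a::real_normed_vector \<Rightarrow> 'a \<Rightarrow> real) \<Rightarrow> 'a \<Rightarrow> 'a \<Rightarrow> 'a \<Rightarrow> real" where
  "d1form th p v w = frechet_derivative (\<lambda>x. th x w) (at p) v - frechet_derivative (\<lambda>x. th x v) (at p) w"

text \<open>Lie derivative of a symmetric 2-tensor g along a vector field K,
  evaluated on constant vector fields.\<close>
definition lie2 :: "('a::real_normed_vector \<Rightarrow> 'a \<Rightarrow> 'a \<Rightarrow> real) \<Rightarrow> ('a \<Rightarrow> 'a) \<Rightarrow> 'a \<Rightarrow> 'a \<Rightarrow> 'a \<Rightarrow> real" where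
  "lie2 g K p v w = frechet_derivative (\<lambda>x. g x v w) (at p) (K p)
     + g p (frechet_derivative K (at p) v) w + g p v (frechet_derivative K (at p) w)"

text \<open>f is a Killing potential of the Kaehler structure (g, omega) on the
  region U (tangent vectors: those satisfying T): its symplectic gradient
  K = J grad f (characterised by omega(K, .) = - df) is a Killing field.\<close>
definition killing_potential ::
  "('a::real_normed_vector \<Rightarrow> bool) \<Rightarrow> 'a set \<Rightarrow> ('a \<Rightarrow> 'a \<Rightarrow> 'a \<Rightarrow> real) \<Rightarrow> ('a \<Rightarrow> 'a \<Rightarrow> 'a \<Rightarrow> real)
     \<Rightarrow> ('a \<Rightarrow> real) \<Rightarrow> bool" where
  "killing_potential T U om g f \<longleftrightarrow>
    (\<exists>K. \<forall>p\<in>U. T (K p) \<and> f differentiable (at p)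
        \<and> (\<forall>w. T w \<longrightarrow> om p (K p) w = - frechet_derivative f (at p) w)
        \<and> K differentiable (at p)
        \<and> (\<forall>v w. (\<lambda>x. g x v w) differentiable (at p))
        \<and> (\<forall>v w. T v \<longrightarrow> T w \<longrightarrow> lie2 g K p v w = 0))"

text \<open>The base Kaehler manifold has points satisfying Base,
  tangent vectors satisfying T1, Kaehler form om1 and complex structure J1
  (given as a relation "J1 p u u' iff u' = J1 u").  The local Sasaki manifold
  N over it is (a relatively open part of) Base x R, with contact form
  eta = dt + theta, d theta = om1, D = ker eta, J lifted horizontally to D.
  The CR f-twist is the leaf space of the Reeb field of eta/f with the Kaehler
  structure induced by d(eta/f)|_D and J; here it is realised locally by a
  submersion pi whose fibres are tangent exactly to the Reeb field, and it is
  required to coincide with the target structure (Target, T2, om2, J2) near p0.\<close>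
definition cr_twist_at ::
  "('a::real_normed_vector \<Rightarrow> bool) \<Rightarrow> ('a \<Rightarrow> bool) \<Rightarrow> ('a \<Rightarrow> 'a \<Rightarrow> 'a \<Rightarrow> real) \<Rightarrow> ('a \<Rightarrow> 'a \<Rightarrow> 'a \<Rightarrow> bool)
   \<Rightarrow> ('a \<Rightarrow> real)
   \<Rightarrow> ('b::real_normed_vector \<Rightarrow> bool) \<Rightarrow> ('b \<Rightarrow> bool) \<Rightarrow> ('b \<Rightarrow> 'b \<Rightarrow> 'b \<Rightarrow> real) \<Rightarrow> ('b \<Rightarrow> 'b \<Rightarrow> 'b \<Rightarrow> bool)
   \<Rightarrow> 'b \<Rightarrow> bool" where
  "cr_twist_at Base T1 om1 J1 f Target T2 om2 J2 p0 \<longleftrightarrow>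
    (\<exists>(th :: 'a \<Rightarrow> 'a \<Rightarrow> real) (O' :: ('a \<times> real) set) (pi :: 'a \<times> real \<Rightarrow> 'b) Dpi.
      let TN = (\<lambda>v. T1 (fst v));
          eta = (\<lambda>y v. snd v + th (fst y) (fst v));
          D = (\<lambda>y v. TN v \<and> eta y v = 0);
          beta = (\<lambda>y v. eta y v / f (fst y));
          Ov = {y \<in> O'. Base (fst y)}
      in open O' \<and> p0 \<in> pi ` Ov \<and>
      (\<forall>y\<in>Ov.
         f (fst y) > 0 \<and> f differentiable (at (fst y))
       \<and> linear (th (fst y)) \<and> (\<forall>w. (\<lambda>x. th x w) differentiable (at (fst y)))
       \<and> (\<forall>v w. T1 v \<longrightarrow> T1 w \<longrightarrow> d1form th (fst y) v w = om1 (fst y) v w)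
       \<and> Target (pi y)
       \<and> (pi has_derivative Dpi y) (at y)
       \<and> (\<forall>v. TN v \<longrightarrow> T2 (Dpi y v))
       \<and> (\<forall>u. T2 u \<longrightarrow> (\<exists>v. TN v \<and> Dpi y v = u))
       \<and> (\<exists>xi. TN xi \<and> beta y xi = 1 \<and> (\<forall>w. TN w \<longrightarrow> d1form beta y xi w = 0)
              \<and> (\<forall>v. TN v \<longrightarrow> (Dpi y v = 0 \<longleftrightarrow> (\<exists>c. v = c *\<^sub>R xi))))
       \<and> (\<forall>v w. D y v \<longrightarrow> D y w \<longrightarrow> d1form beta y v w = om2 (pi y) (Dpi y v) (Dpi y w))
       \<and> (\<forall>v w. D y v \<longrightarrow> D y w \<longrightarrow> J1 (fst y) (fst v) (fst w) \<longrightarrow> J2 (pi y) (Dpi y v) (Dpi y w))))"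

end

theory Submission
  imports Defs
begin

lemma exhaust_5:
  fixes x :: 5
  shows "x = 1 \<or> x = 2 \<or> x = 3 \<or> x = 4 \<or> x = 5"
proof (induct x)
  case (of_int z)
  then have "z = 0 \<or> z = 1 \<or> z = 2 \<or> z = 3 \<or> z = 4" by fastforce
  then show ?case by auto
qed

lemmas has_derivative_vec_nth'[derivative_intros] = bounded_linear.has_derivative[OF bounded_linear_vec_nth]

definition e :: "5 \<Rightarrow> real^5" where "e i = axis i 1"
lemma e_nth[simp]:
  "e 1 $ 1 = 1" "e 1 $ 2 = 0" "e 1 $ 3 = 0" "e 1 $ 4 = 0" "e 1 $ 5 = 0"
  "e 2 $ 1 = 0" "e 2 $ 2 = 1" "e 2 $ 3 = 0" "e 2 $ 4 = 0" "e 2 $ 5 = 0"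
  "e 3 $ 1 = 0" "e 3 $ 2 = 0" "e 3 $ 3 = 1" "e 3 $ 4 = 0" "e 3 $ 5 = 0"
  "e 4 $ 1 = 0" "e 4 $ 2 = 0" "e 4 $ 3 = 0" "e 4 $ 4 = 1" "e 4 $ 5 = 0"
  "e 5 $ 1 = 0" "e 5 $ 2 = 0" "e 5 $ 3 = 0" "e 5 $ 4 = 0" "e 5 $ 5 = 1"
  by (simp_all add: e_def axis_def)

lemma forall_5: "(\<forall>i::5. P i) \<longleftrightarrow> P 1 \<and> P 2 \<and> P 3 \<and> P 4 \<and> P 5"
  by (metis exhaust_5)

lemma vec5_eq: "(x::real^5) = y \<longleftrightarrow> x$1 = y$1 \<and> x$2 = y$2 \<and> x$3 = y$3 \<and> x$4 = y$4 \<and> x$5 = y$5"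
  by (simp add: vec_eq_iff forall_5)

definition thO :: "real^5 \<Rightarrow> real^5 \<Rightarrow> real" where
  "thO x w = (x$1 + x$2) * w$3 + 2 * (x$1 * x$2) * w$4"

definition DP :: "real \<Rightarrow> real \<Rightarrow> real \<Rightarrow> (real^5) \<times> real \<Rightarrow> real^5" where
  "DP q0 q1 q2 v = ((fst v)$1) *\<^sub>R e 1 + ((fst v)$2) *\<^sub>R e 2 + (q0 * (fst v)$3 - q1* snd v) *\<^sub>R e 3
     + (q0 * (fst v)$4 - q2/2* snd v) *\<^sub>R e 4 + (2 * q1 * (fst v)$4 - q2 * (fst v)$3) *\<^sub>R e 5"

lemma DP_nth[simp]:
  "DP q0 q1 q2 v $ 1 = (fst v)$1" "DP q0 q1 q2 v $ 2 = (fst v)$2"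
  "DP q0 q1 q2 v $ 3 = q0 * (fst v)$3 - q1* snd v" "DP q0 q1 q2 v $ 4 = q0 * (fst v)$4 - q2/2* snd v"
  "DP q0 q1 q2 v $ 5 = 2 * q1 * (fst v)$4 - q2 * (fst v)$3"
  by (simp_all add: DP_def)

definition PI :: "real \<Rightarrow> real \<Rightarrow> real \<Rightarrow> real^5 \<Rightarrow> (real^5) \<times> real \<Rightarrow> real^5" where
  "PI q0 q1 q2 p0 y = DP q0 q1 q2 y + (p0$3 *\<^sub>R e 3 + p0$4 *\<^sub>R e 4 + p0$5 *\<^sub>R e 5)"

lemma PI_nth[simp]:
  "PI q0 q1 q2 p0 v $ 1 = (fst v)$1" "PI q0 q1 q2 p0 v $ 2 = (fst v)$2"
  "PI q0 q1 q2 p0 v $ 3 = q0 * (fst v)$3 - q1* snd v + p0$3" "PI q0 q1 q2 p0 v $ 4 = q0 * (fst v)$4 - q2/2* snd v + p0$4"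
  "PI q0 q1 q2 p0 v $ 5 = 2 * q1 * (fst v)$4 - q2 * (fst v)$3 + p0$5"
  by (simp_all add: PI_def)

lemma DP_bl: "bounded_linear (DP q0 q1 q2)"
proof -
  have "linear (DP q0 q1 q2)"
    by (rule linearI) (simp_all add: vec5_eq algebra_simps)
  then show ?thesis using linear_conv_bounded_linear by blast
qed

lemma PI_deriv: "(PI q0 q1 q2 p0 has_derivative DP q0 q1 q2) (at y)"
proof -
  have "((\<lambda>y. DP q0 q1 q2 y + (p0$3 *\<^sub>R e 3 + p0$4 *\<^sub>R e 4 + p0$5 *\<^sub>R e 5)) has_derivative (\<lambda>v. DP q0 q1 q2 v + 0)) (at y)"
    by (intro has_derivative_add bounded_linear.has_derivative[OF DP_bl] has_derivative_ident has_derivative_const)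
  then show ?thesis unfolding PI_def[abs_def] by simp
qed

lemma F_deriv: "((\<lambda>(p::real^5). fq q0 q1 q2 (p$1) (p$2)) has_derivative
   (\<lambda>v. q1 * (v$1 + v$2) + q2 * (v$1 * p$2 + p$1 * v$2))) (at p)"
  unfolding fq_def
  by (auto intro!: derivative_eq_intros simp: algebra_simps)

lemma th_deriv: "((\<lambda>x. thO x w) has_derivative
   (\<lambda>v. (v$1+v$2) * w$3 + 2 * (v$1 * x$2+x$1 * v$2) * w$4)) (at x)"
  unfolding thO_def
  by (auto intro!: derivative_eq_intros simp: algebra_simps)

lemma beta_deriv:
  fixes y :: "(real^5) \<times> real"
  assumes "fq q0 q1 q2 ((fst y)$1) ((fst y)$2) \<noteq> 0"
  shows "((\<lambda>z. (snd w + thO (fst z) (fst w)) / fq q0 q1 q2 ((fst z)$1) ((fst z)$2)) has_derivative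
   (\<lambda>v. ((((fst v)$1+(fst v)$2) * (fst w)$3 + 2 * ((fst v)$1 * (fst y)$2+(fst y)$1 * (fst v)$2) * (fst w)$4)
            * fq q0 q1 q2 ((fst y)$1) ((fst y)$2)
          - (snd w + thO (fst y) (fst w)) * (q1 * ((fst v)$1+(fst v)$2) + q2 * ((fst v)$1 * (fst y)$2 + (fst y)$1 * (fst v)$2)))
        / (fq q0 q1 q2 ((fst y)$1) ((fst y)$2) * fq q0 q1 q2 ((fst y)$1) ((fst y)$2)))) (at y)"
proof -
  have 1: "((\<lambda>z. snd w + thO (fst z) (fst w)) has_derivative
     (\<lambda>v. ((fst v)$1+(fst v)$2) * (fst w)$3 + 2 * ((fst v)$1 * (fst y)$2+(fst y)$1 * (fst v)$2) * (fst w)$4)) (at y)"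
    using has_derivative_compose[OF has_derivative_fst[of "\<lambda>x. x" "\<lambda>x. x"] th_deriv[of "fst w" "fst y"]]
    by (auto intro!: derivative_eq_intros)
  have 2: "((\<lambda>z. fq q0 q1 q2 ((fst z)$1) ((fst z)$2)) has_derivative
     (\<lambda>v. q1 * ((fst v)$1+(fst v)$2) + q2 * ((fst v)$1 * (fst y)$2 + (fst y)$1 * (fst v)$2))) (at y)"
    using has_derivative_compose[OF has_derivative_fst[of "\<lambda>x. x" "\<lambda>x. x"] F_deriv[of q0 q1 q2 "fst y"]]
    by simp
  show ?thesis using has_derivative_divide'[OF 1 2 assms] by simp
qed

lemma trans_zero:
  fixes f :: "'a::real_normed_vector \<Rightarrow> real"
  assumes "f differentiable (at p)" "\<And>x t. f (x + t *\<^sub>R k) = f x"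
  shows "frechet_derivative f (at p) k = 0"
proof -
  let ?D = "frechet_derivative f (at p)"
  have D: "(f has_derivative ?D) (at p)" using assms(1) frechet_derivative_works by blast
  have "((\<lambda>t::real. p + t *\<^sub>R k) has_derivative (\<lambda>t. t *\<^sub>R k)) (at 0)"
    by (auto intro!: derivative_eq_intros)
  from has_derivative_compose[OF this] D
  have "((\<lambda>t::real. f (p + t *\<^sub>R k)) has_derivative (\<lambda>t. ?D (t *\<^sub>R k))) (at 0)" by simp
  moreover have "((\<lambda>t::real. f (p + t *\<^sub>R k)) has_derivative (\<lambda>t. 0)) (at 0)"
    using assms(2) by simp
  ultimately have "(\<lambda>t. ?D (t *\<^sub>R k)) = (\<lambda>t. 0)" by (rule has_derivative_unique)
  then show ?thesis by (metis scaleR_one)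
qed


lemma DP_tang: "tang q0 q1 q2 (DP q0 q1 q2 v)"
  unfolding tang_def by (simp add: algebra_simps)

definition xi :: "real \<Rightarrow> real \<Rightarrow> real \<Rightarrow> (real^5) \<times> real" where
  "xi q0 q1 q2 = (q1 *\<^sub>R e 3 + (q2/2) *\<^sub>R e 4, q0)"

lemma xi_nth[simp]: "(fst (xi q0 q1 q2))$1 = 0" "(fst (xi q0 q1 q2))$2 = 0"
  "(fst (xi q0 q1 q2))$3 = q1" "(fst (xi q0 q1 q2))$4 = q2/2" "(fst (xi q0 q1 q2))$5 = 0"
  "snd (xi q0 q1 q2) = q0"
  by (simp_all add: xi_def)

lemma pair5_eq: "(v::(real^5)\<times>real) = w \<longleftrightarrow> (fst v)$1 = (fst w)$1 \<and> (fst v)$2 = (fst w)$2 \<and>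
   (fst v)$3 = (fst w)$3 \<and> (fst v)$4 = (fst w)$4 \<and> (fst v)$5 = (fst w)$5 \<and> snd v = snd w"
  by (simp add: prod_eq_iff vec5_eq)

lemma DP_ker:
  assumes q: "\<not> (q0 = 0 \<and> q1 = 0 \<and> q2 = 0)" and v5: "(fst v)$5 = 0"
  shows "DP q0 q1 q2 v = 0 \<longleftrightarrow> (\<exists>c. v = c *\<^sub>R xi q0 q1 q2)"
proof
  assume "\<exists>c. v = c *\<^sub>R xi q0 q1 q2"
  then obtain c where "v = c *\<^sub>R xi q0 q1 q2" by blast
  then show "DP q0 q1 q2 v = 0" by (simp add: vec5_eq algebra_simps)
next
  assume "DP q0 q1 q2 v = 0"
  then have h: "(fst v)$1 = 0" "(fst v)$2 = 0" "q0 * (fst v)$3 - q1 * snd v = 0"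
     "q0 * (fst v)$4 - q2/2 * snd v = 0" "2 * q1 * (fst v)$4 - q2 * (fst v)$3 = 0"
    by (simp_all add: vec5_eq)
  have key: "\<exists>c. (fst v)$3 = c * q1 \<and> (fst v)$4 = c * (q2/2) \<and> snd v = c * q0"
  proof (cases "q0 = 0")
    case False
    have "(fst v)$3 = snd v / q0 * q1" "(fst v)$4 = snd v / q0 * (q2/2)" "snd v = snd v / q0 * q0"
      using h(3,4) False by (simp_all add: field_simps)
    then show ?thesis by blast
  next
    case True
    show ?thesis
    proof (cases "q1 = 0")
      case False
      have s: "snd v = 0" using h(3) True False by simp
      have "(fst v)$3 = (fst v)$3 / q1 * q1" "(fst v)$4 = (fst v)$3 / q1 * (q2/2)" "snd v = (fst v)$3 / q1 * q0"
        using h(5) False True s by (simp_all add: field_simps)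
      then show ?thesis by blast
    next
      case q1: True
      with q True have q2: "q2 \<noteq> 0" by simp
      have s: "snd v = 0" using h(4) True q2 by simp
      have v3: "(fst v)$3 = 0" using h(5) q1 q2 by simp
      have "(fst v)$3 = 2 * (fst v)$4 / q2 * q1" "(fst v)$4 = 2 * (fst v)$4 / q2 * (q2/2)" "snd v = 2 * (fst v)$4 / q2 * q0"
        using q1 q2 True s v3 by (simp_all add: field_simps)
      then show ?thesis by blast
    qed
  qed
  then obtain c where c: "(fst v)$3 = c * q1" "(fst v)$4 = c * (q2/2)" "snd v = c * q0" by blast
  have "v = c *\<^sub>R xi q0 q1 q2"
    unfolding pair5_eq using c h(1,2) v5 by simp
  then show "\<exists>c. v = c *\<^sub>R xi q0 q1 q2" by blast
qed

lemma DP_surj: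
  assumes q: "\<not> (q0 = 0 \<and> q1 = 0 \<and> q2 = 0)" and u: "tang q0 q1 q2 u"
  shows "\<exists>v. tang 1 0 0 (fst v) \<and> DP q0 q1 q2 v = u"
proof -
  have u': "2 * q1 * u$4 = q0 * u$5 + q2 * u$3" using u unfolding tang_def .
  have "\<exists>a b s. q0 * a - q1 * s = u$3 \<and> q0 * b - q2/2 * s = u$4 \<and> 2 * q1 * b - q2 * a = u$5"
  proof (cases "q0 = 0")
    case False
    have "q0 * (u$3/q0) - q1 * 0 = u$3 \<and> q0 * (u$4/q0) - q2/2 * 0 = u$4 \<and> 2 * q1 * (u$4/q0) - q2 * (u$3/q0) = u$5"
      using False u' by (simp add: field_simps)
    then show ?thesis by blast
  next
    case True
    show ?thesis
    proof (cases "q1 = 0")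
      case False
      have "q0 * 0 - q1 * (- u$3/q1) = u$3 \<and> q0 * (u$5/(2*q1)) - q2/2 * (- u$3/q1) = u$4 \<and> 2 * q1 * (u$5/(2*q1)) - q2 * 0 = u$5"
        using False True u' by (simp add: field_simps)
      then show ?thesis by blast
    next
      case q1: True
      with q True have q2: "q2 \<noteq> 0" by simp
      have u3: "u$3 = 0" using u' q1 True q2 by simp
      have "q0 * (- u$5/q2) - q1 * (- 2 * u$4/q2) = u$3 \<and> q0 * 0 - q2/2 * (- 2 * u$4/q2) = u$4 \<and> 2 * q1 * 0 - q2 * (- u$5/q2) = u$5"
        using q1 True q2 u3 by (simp add: field_simps)
      then show ?thesis by blast
    qed
  qed
  then obtain a b s where abs: "q0 * a - q1 * s = u$3" "q0 * b - q2/2 * s = u$4" "2 * q1 * b - q2 * a = u$5" by blast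
  let ?v = "(u$1 *\<^sub>R e 1 + u$2 *\<^sub>R e 2 + a *\<^sub>R e 3 + b *\<^sub>R e 4, s)"
  have "tang 1 0 0 (fst ?v)" by (simp add: tang_def)
  moreover have "DP q0 q1 q2 ?v = u" unfolding vec5_eq using abs by simp
  ultimately show ?thesis by blast
qed

definition dth :: "real^5 \<Rightarrow> real^5 \<Rightarrow> real^5 \<Rightarrow> real" where
  "dth x v w = (v$1 + v$2) * w$3 + 2 * (v$1 * x$2 + x$1 * v$2) * w$4"

lemma om1_eq:
  assumes "x$1 \<noteq> x$2" "v$5 = 0" "w$5 = 0"
  shows "omega_amb 1 0 0 x v w = dth x v w - dth x w v"
proof -
  have d: "x$1 - x$2 \<noteq> 0" using assms by simp
  have a1: "(x$1 - x$2) * alpha1 1 0 0 x u = u$3 + 2 * x$2 * u$4 + (x$2)^2 * u$5" for u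
    using d unfolding alpha1_def fq_def by simp
  have a2: "(x$1 - x$2) * alpha2 1 0 0 x u = u$3 + 2 * x$1 * u$4 + (x$1)^2 * u$5" for u
    using d unfolding alpha2_def fq_def by simp
  have "omega_amb 1 0 0 x v w = v$1 * ((x$1 - x$2) * alpha1 1 0 0 x w) - w$1 * ((x$1 - x$2) * alpha1 1 0 0 x v)
     + v$2 * ((x$1 - x$2) * alpha2 1 0 0 x w) - w$2 * ((x$1 - x$2) * alpha2 1 0 0 x v)"
    unfolding omega_amb_def wedge_def fq_def by (simp add: algebra_simps)
  also have "\<dots> = dth x v w - dth x w v"
    unfolding a1 a2 dth_def using assms by (simp add: algebra_simps)
  finally show ?thesis .
qed

lemma alpha_tw:
  assumes F: "fq q0 q1 q2 ((fst y)$1) ((fst y)$2) \<noteq> 0" and d: "(fst y)$1 \<noteq> (fst y)$2"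
    and N: "snd v + thO (fst y) (fst v) = 0" and v5: "(fst v)$5 = 0"
  shows "alpha1 q0 q1 q2 (PI q0 q1 q2 p0 y) (DP q0 q1 q2 v) = alpha1 1 0 0 (fst y) (fst v)"
    "alpha2 q0 q1 q2 (PI q0 q1 q2 p0 y) (DP q0 q1 q2 v) = alpha2 1 0 0 (fst y) (fst v)"
proof -
  let ?F = "fq q0 q1 q2 ((fst y)$1) ((fst y)$2)"
  have s: "snd v = - thO (fst y) (fst v)" using N by simp
  have n1: "(DP q0 q1 q2 v)$3 + 2 * (fst y)$2 * (DP q0 q1 q2 v)$4 + ((fst y)$2)^2 * (DP q0 q1 q2 v)$5
      = ?F * ((fst v)$3 + 2 * (fst y)$2 * (fst v)$4 + ((fst y)$2)^2 * (fst v)$5)"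
    using v5 unfolding DP_nth s thO_def fq_def by (simp add: algebra_simps power2_eq_square)
  have n2: "(DP q0 q1 q2 v)$3 + 2 * (fst y)$1 * (DP q0 q1 q2 v)$4 + ((fst y)$1)^2 * (DP q0 q1 q2 v)$5
      = ?F * ((fst v)$3 + 2 * (fst y)$1 * (fst v)$4 + ((fst y)$1)^2 * (fst v)$5)"
    using v5 unfolding DP_nth s thO_def fq_def by (simp add: algebra_simps power2_eq_square)
  show "alpha1 q0 q1 q2 (PI q0 q1 q2 p0 y) (DP q0 q1 q2 v) = alpha1 1 0 0 (fst y) (fst v)"
    unfolding alpha1_def PI_nth n1 using F by (simp add: fq_def)
  show "alpha2 q0 q1 q2 (PI q0 q1 q2 p0 y) (DP q0 q1 q2 v) = alpha2 1 0 0 (fst y) (fst v)"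
    unfolding alpha2_def PI_nth n2 using F by (simp add: fq_def)
qed



lemma fd_beta:
  fixes y v w :: "(real^5) \<times> real"
  assumes "fq q0 q1 q2 ((fst y)$1) ((fst y)$2) \<noteq> 0"
  shows "frechet_derivative (\<lambda>z. (snd w + thO (fst z) (fst w)) / fq q0 q1 q2 ((fst z)$1) ((fst z)$2)) (at y) v
   = ((dth (fst y) (fst v) (fst w)) * fq q0 q1 q2 ((fst y)$1) ((fst y)$2)
          - (snd w + thO (fst y) (fst w)) * (q1 * ((fst v)$1+(fst v)$2) + q2 * ((fst v)$1 * (fst y)$2 + (fst y)$1 * (fst v)$2)))
        / (fq q0 q1 q2 ((fst y)$1) ((fst y)$2) * fq q0 q1 q2 ((fst y)$1) ((fst y)$2))"
  using frechet_derivative_at[OF beta_deriv[OF assms, of w]] unfolding dth_def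
  by (metis (no_types, lifting))

lemma d1beta:
  fixes y v w :: "(real^5) \<times> real"
  assumes F: "fq q0 q1 q2 ((fst y)$1) ((fst y)$2) \<noteq> 0"
  shows "d1form (\<lambda>z u. (snd u + thO (fst z) (fst u)) / fq q0 q1 q2 ((fst z)$1) ((fst z)$2)) y v w
   = ((dth (fst y) (fst v) (fst w) - dth (fst y) (fst w) (fst v)) * fq q0 q1 q2 ((fst y)$1) ((fst y)$2)
       - (snd w + thO (fst y) (fst w)) * (q1 * ((fst v)$1+(fst v)$2) + q2 * ((fst v)$1 * (fst y)$2 + (fst y)$1 * (fst v)$2))
       + (snd v + thO (fst y) (fst v)) * (q1 * ((fst w)$1+(fst w)$2) + q2 * ((fst w)$1 * (fst y)$2 + (fst y)$1 * (fst w)$2)))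
      / (fq q0 q1 q2 ((fst y)$1) ((fst y)$2) * fq q0 q1 q2 ((fst y)$1) ((fst y)$2))"
  unfolding d1form_def fd_beta[OF F] by (simp add: diff_divide_distrib add_divide_distrib algebra_simps)

lemma d1th:
  "d1form thO x v w = dth x v w - dth x w v"
proof -
  have "frechet_derivative (\<lambda>x. thO x u) (at x) = (\<lambda>v. dth x v u)" for u
    using frechet_derivative_at[OF th_deriv[of u x]] unfolding dth_def by simp
  then show ?thesis unfolding d1form_def by simp
qed

lemma om_tw:
  fixes y v w :: "(real^5) \<times> real"
  assumes F: "fq q0 q1 q2 ((fst y)$1) ((fst y)$2) \<noteq> 0" and d: "(fst y)$1 \<noteq> (fst y)$2"
    and Nv: "snd v + thO (fst y) (fst v) = 0" and v5: "(fst v)$5 = 0"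
    and Nw: "snd w + thO (fst y) (fst w) = 0" and w5: "(fst w)$5 = 0"
  shows "omega_amb q0 q1 q2 (PI q0 q1 q2 p0 y) (DP q0 q1 q2 v) (DP q0 q1 q2 w)
     = omega_amb 1 0 0 (fst y) (fst v) (fst w) / fq q0 q1 q2 ((fst y)$1) ((fst y)$2)"
  unfolding omega_amb_def wedge_def
  using alpha_tw[OF F d Nv v5, of p0] alpha_tw[OF F d Nw w5, of p0]
  by (simp add: fq_def)


lemma twist:
  assumes p0: "amb_dom q0 q1 q2 A B p0"
  shows "cr_twist_at (amb_dom 1 0 0 A B) (tang 1 0 0) (omega_amb 1 0 0) (J_amb 1 0 0 A B)
              (\<lambda>p. fq q0 q1 q2 (p$1) (p$2))
              (amb_dom q0 q1 q2 A B) (tang q0 q1 q2) (omega_amb q0 q1 q2) (J_amb q0 q1 q2 A B) p0"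
proof -
  have q: "\<not> (q0 = 0 \<and> q1 = 0 \<and> q2 = 0)" using p0 unfolding amb_dom_def fq_def by auto
  show ?thesis
  unfolding cr_twist_at_def Let_def
  apply (rule exI[of _ thO], rule exI[of _ "{y. 0 < fq q0 q1 q2 ((fst y)$1) ((fst y)$2)}"],
      rule exI[of _ "PI q0 q1 q2 p0"], rule exI[of _ "\<lambda>y. DP q0 q1 q2"])
  apply (intro conjI ballI)
  subgoal unfolding fq_def by (intro open_Collect_less continuous_intros)
  subgoal
    apply (rule image_eqI[where x = "(p0$1 *\<^sub>R e 1 + p0$2 *\<^sub>R e 2, 0)"])
    using p0 by (simp_all add: vec5_eq amb_dom_def tang_def fq_def)
  subgoal by simp
  subgoal using F_deriv differentiable_def by blast
  subgoal unfolding thO_def by (rule linearI) (simp_all add: algebra_simps)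
  subgoal using th_deriv differentiable_def by blast
  subgoal for y by (auto simp: d1th amb_dom_def tang_def intro!: om1_eq[symmetric])
  subgoal for y using p0 by (simp add: amb_dom_def tang_def fq_def algebra_simps)
  subgoal by (rule PI_deriv)
  subgoal by (simp add: DP_tang)
  subgoal using DP_surj[OF q] by blast
  subgoal for y
    apply (rule exI[of _ "xi q0 q1 q2"])
    apply (intro conjI allI impI)
    subgoal by (simp add: tang_def)
    subgoal by (simp add: thO_def fq_def field_simps)
    subgoal for w
    proof -
      assume "y \<in> {y \<in> {y. 0 < fq q0 q1 q2 ((fst y)$1) ((fst y)$2)}. amb_dom 1 0 0 A B (fst y)}"
      then have F: "fq q0 q1 q2 ((fst y)$1) ((fst y)$2) \<noteq> 0" by simp
      show ?thesis unfolding d1beta[OF F] by (simp add: dth_def thO_def fq_def algebra_simps)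
    qed
    subgoal for v using DP_ker[OF q] by (simp add: tang_def)
    done
  subgoal for y
    apply (intro allI impI)
    subgoal for v w
      using om_tw[of q0 q1 q2 y v w p0] om1_eq[of "fst y" "fst v" "fst w"]
      by (auto simp: d1beta amb_dom_def tang_def)
    done
  subgoal for y
    apply (intro allI impI)
    subgoal for v w
      using alpha_tw[of q0 q1 q2 y v p0] alpha_tw[of q0 q1 q2 y w p0] DP_tang[of q0 q1 q2 w, unfolded tang_def]
      by (auto simp: J_amb_def DP_tang amb_dom_def tang_def)
    done
  done
qed


lemma diff_nth[derivative_intros]: "(\<lambda>x::real^5. x$i) differentiable F"
  unfolding differentiable_def using has_derivative_vec_nth'[OF has_derivative_ident] by blast

lemma g_diff:
  assumes hA: "\<forall>x. A x > 0 \<longrightarrow> A differentiable (at x)"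
      and hB: "\<forall>x. B x > 0 \<longrightarrow> B differentiable (at x)"
      and p: "amb_dom 1 0 0 A B p"
  shows "(\<lambda>x. g_amb 1 0 0 A B x v w) differentiable (at p)"
proof -
  have dA: "(\<lambda>x. A (x$1)) differentiable (at p)"
    using p hA by (intro differentiable_compose[of A "\<lambda>x. x$1"]) (auto simp: amb_dom_def intro: diff_nth)
  have dB: "(\<lambda>x. B (x$2)) differentiable (at p)"
    using p hB by (intro differentiable_compose[of B "\<lambda>x. x$2"]) (auto simp: amb_dom_def intro: diff_nth)
  have ne: "A (p$1) \<noteq> 0" "B (p$2) \<noteq> 0" "p$1 - p$2 \<noteq> 0" "p$1 \<noteq> p$2" using p by (auto simp: amb_dom_def)
  show ?thesis
    unfolding g_amb_def alpha1_def alpha2_def fq_def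
    by (intro derivative_intros dA dB) (simp_all add: ne)
qed

lemma killing:
  assumes hA: "\<forall>x. A x > 0 \<longrightarrow> A differentiable (at x)"
      and hB: "\<forall>x. B x > 0 \<longrightarrow> B differentiable (at x)"
  shows "killing_potential (tang 1 0 0) {p. amb_dom 1 0 0 A B p} (omega_amb 1 0 0) (g_amb 1 0 0 A B)
            (\<lambda>p. fq q0 q1 q2 (p$1) (p$2))"
  unfolding killing_potential_def
proof (rule exI[of _ "\<lambda>p. q1 *\<^sub>R e 3 + (q2/2) *\<^sub>R e 4"], intro ballI conjI allI impI)
  fix p :: "real^5" assume "p \<in> {p. amb_dom 1 0 0 A B p}"
  then have p: "amb_dom 1 0 0 A B p" by simp
  let ?k = "q1 *\<^sub>R e 3 + (q2/2) *\<^sub>R e 4"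
  show "tang 1 0 0 ?k" by (simp add: tang_def)
  show "(\<lambda>p. fq q0 q1 q2 (p$1) (p$2)) differentiable (at p)" using F_deriv differentiable_def by blast
  show "(\<lambda>p. ?k) differentiable (at p)" by simp
  show "(\<lambda>x. g_amb 1 0 0 A B x v w) differentiable (at p)" for v w using g_diff[OF hA hB p] .
  fix w
  show "tang 1 0 0 w \<Longrightarrow> omega_amb 1 0 0 p ?k w = - frechet_derivative (\<lambda>p. fq q0 q1 q2 (p$1) (p$2)) (at p) w"
  proof -
    assume w: "tang 1 0 0 w"
    have d: "p$1 - p$2 \<noteq> 0" using p by (simp add: amb_dom_def)
    have fd: "frechet_derivative (\<lambda>p. fq q0 q1 q2 (p$1) (p$2)) (at p) w = q1 * (w$1 + w$2) + q2 * (w$1 * p$2 + p$1 * w$2)"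
      by (simp add: frechet_derivative_at[OF F_deriv[of q0 q1 q2 p], symmetric])
    have "omega_amb 1 0 0 p ?k w = dth p ?k w - dth p w ?k"
      using d w by (intro om1_eq) (simp_all add: tang_def)
    then show ?thesis unfolding fd by (simp add: dth_def algebra_simps)
  qed
next
  fix p :: "real^5" and v w assume "p \<in> {p. amb_dom 1 0 0 A B p}"
  then have p: "amb_dom 1 0 0 A B p" by simp
  let ?k = "q1 *\<^sub>R e 3 + (q2/2) *\<^sub>R e 4"
  have fk: "frechet_derivative (\<lambda>p. ?k) (at p) = (\<lambda>_. 0)"
    by (rule frechet_derivative_at[symmetric]) (rule has_derivative_const)
  have inv: "g_amb 1 0 0 A B (x + t *\<^sub>R ?k) v w = g_amb 1 0 0 A B x v w" for x t
  proof -
    have h1: "(x + t *\<^sub>R ?k)$1 = x$1" and h2: "(x + t *\<^sub>R ?k)$2 = x$2" by simp_all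
    show ?thesis by (simp only: g_amb_def alpha1_def alpha2_def h1 h2)
  qed
  have t: "frechet_derivative (\<lambda>x. g_amb 1 0 0 A B x v w) (at p) ?k = 0"
    by (rule trans_zero[OF g_diff[OF hA hB p]]) (rule inv)
  have g0: "g_amb 1 0 0 A B p 0 w = 0" "g_amb 1 0 0 A B p v 0 = 0"
    by (simp_all add: g_amb_def alpha1_def alpha2_def)
  show "lie2 (g_amb 1 0 0 A B) (\<lambda>p. ?k) p v w = 0"
    unfolding lie2_def fk t g0 by simp
qed


theorem corollary4:
  fixes q0 q1 q2 :: real and A B :: "real \<Rightarrow> real"
  assumes "\<forall>x. A x > 0 \<longrightarrow> A differentiable (at x)"
      and "\<forall>x. B x > 0 \<longrightarrow> B differentiable (at x)"
  shows "killing_potential (tang 1 0 0) {p. amb_dom 1 0 0 A B p} (omega_amb 1 0 0) (g_amb 1 0 0 A B)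
            (\<lambda>p. fq q0 q1 q2 (p$1) (p$2))
       \<and> (\<forall>p0. amb_dom q0 q1 q2 A B p0 \<longrightarrow>
            cr_twist_at (amb_dom 1 0 0 A B) (tang 1 0 0) (omega_amb 1 0 0) (J_amb 1 0 0 A B)
              (\<lambda>p. fq q0 q1 q2 (p$1) (p$2))
              (amb_dom q0 q1 q2 A B) (tang q0 q1 q2) (omega_amb q0 q1 q2) (J_amb q0 q1 q2 A B) p0)"
  using killing[OF assms] twist by blast

end
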